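(* Let $k\ge 1$ and $m\ge 0$ be integers such that $2^{m+\nu_2(k)}>k$. Then the smallest integer $n\ge k$ such that $2^m$ divides $\binom{n}{k}$ is $n=2^{m+\nu_2(k)}$.
   Context: $\nu_2(x)$ denotes the 2-adic valuation of a positive integer $x$, i.e. the exponent of the largest power of $2$ dividing $x$. *)

theory Defs
  imports "HOL-Computational_Algebra.Computational_Algebra"
begin

definition nu2 :: "nat \<Rightarrow> nat" where
  "nu2 x = multiplicity (2::nat) x"

end

theory Submission
  imports Defs
begin

abbreviation g :: "nat \<Rightarrow> nat" where "g n \<equiv> multiplicity (2::nat) (fact n)"

lemma m2_mult: "x \<noteq> 0 \<Longrightarrow> y \<noteq> 0 \<Longrightarrow> multiplicity (2::nat) (x*y) = multiplicity 2 x + multiplicity 2 y"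
  by (rule prime_elem_multiplicity_mult_distrib) auto

lemma dvd_iff_mult: "(x::nat) \<noteq> 0 \<Longrightarrow> 2 ^ i dvd x \<longleftrightarrow> i \<le> multiplicity 2 x"
  by (rule power_dvd_iff_le_multiplicity) auto

lemma card_pow_dvd:
  assumes "x \<noteq> 0" "x < 2 ^ M"
  shows "card {i\<in>{1..M}. (2::nat)^i dvd x} = multiplicity 2 x"
proof -
  have "2 ^ multiplicity 2 x \<le> x"
    using multiplicity_dvd[of 2 x] assms(1) dvd_imp_le by blast
  then have "2 ^ multiplicity 2 x < (2::nat) ^ M" using assms by linarith
  then have le: "multiplicity 2 x < M" using power_less_imp_less_exp by fastforce
  have "{i\<in>{1..M}. (2::nat)^i dvd x} = {1..multiplicity 2 x}"
  proof (intro set_eqI iffI)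
    fix i assume "i \<in> {i\<in>{1..M}. (2::nat)^i dvd x}"
    then show "i \<in> {1..multiplicity 2 x}" using dvd_iff_mult[OF assms(1), of i] by simp
  next
    fix i assume "i \<in> {1..multiplicity 2 x}"
    then show "i \<in> {i\<in>{1..M}. (2::nat)^i dvd x}" using dvd_iff_mult[OF assms(1), of i] le by simp
  qed
  then show ?thesis by simp
qed

lemma legendre:
  "n < 2 ^ M \<Longrightarrow> g n = (\<Sum>i\<in>{1..M}. n div 2 ^ i)"
proof (induction n)
  case 0
  then show ?case by simp
next
  case (Suc n)
  have "g (Suc n) = multiplicity 2 (Suc n) + g n"
  proof -
    have "(fact (Suc n)::nat) = Suc n * fact n" by (metis fact_Suc of_nat_id)
    then show ?thesis using m2_mult[of "Suc n" "fact n"] by simp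
  qed
  also have "g n = (\<Sum>i\<in>{1..M}. n div 2 ^ i)" using Suc by simp
  also have "multiplicity 2 (Suc n) = card {i\<in>{1..M}. (2::nat)^i dvd Suc n}"
    using card_pow_dvd[of "Suc n" M] Suc.prems by simp
  also have "\<dots> = (\<Sum>i\<in>{1..M}. if (2::nat)^i dvd Suc n then 1 else 0)"
  proof -
    have "{i\<in>{1..M}. (2::nat)^i dvd Suc n} = {1..M} \<inter> {i. (2::nat)^i dvd Suc n}" by blast
    then show ?thesis by (simp add: sum.If_cases)
  qed
  also have "\<dots> + (\<Sum>i\<in>{1..M}. n div 2 ^ i) = (\<Sum>i\<in>{1..M}. Suc n div 2 ^ i)"
    by (subst sum.distrib[symmetric], rule sum.cong) (auto simp: div_Suc dvd_eq_mod_eq_0)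
  finally show ?case .
qed

lemma div_add_le: "((a::nat) + b) div d \<le> a div d + b div d + 1"
proof (cases "d = 0")
  case False
  have "a + b = d * (a div d + b div d) + (a mod d + b mod d)"
    by (simp add: algebra_simps)
  moreover have "a mod d + b mod d < d * 2"
    using False mod_less_divisor[of d a] mod_less_divisor[of d b] by linarith
  ultimately have "a + b < d * (a div d + b div d) + d * 2" by linarith
  then have "a + b < d * (a div d + b div d + 2)" by (simp add: algebra_simps)
  then have "(a+b) div d < a div d + b div d + 2"
    using div_less_iff_less_mult[of d "a+b" "a div d + b div d + 2"] False
    by (simp only: mult.commute[of d])
  then show ?thesis by simp
qed simp

theorem mainTheorem1:
  fixes k m :: nat
  assumes "k \<ge> 1" and "2 ^ (m + nu2 k) > k"
  shows "(LEAST n::nat. n \<ge> k \<and> 2 ^ m dvd (n choose k)) = 2 ^ (m + nu2 k)"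
proof -
  define v where "v = nu2 k"
  define M where "M = m + v"
  have k0: "k \<noteq> 0" using assms by simp
  have vdvd: "2 ^ v dvd k" unfolding v_def nu2_def by (rule multiplicity_dvd)
  have "2 ^ v \<le> k" using vdvd k0 dvd_imp_le by blast
  moreover have "k < 2 ^ (m + v)" using assms(2) unfolding v_def by simp
  ultimately have m1: "m \<ge> 1" by (cases m) auto
  have kM: "k < 2 ^ M" using assms unfolding M_def v_def by simp
  show ?thesis unfolding v_def[symmetric] M_def[symmetric]
  proof (rule Least_equality)
    show "k \<le> 2 ^ M \<and> 2 ^ m dvd (2 ^ M choose k)"
    proof
      show "k \<le> 2 ^ M" using kM by simp
      obtain k' where k': "k = Suc k'" using k0 by (cases k) auto
      obtain N' where N': "2 ^ M = Suc N'" by (metis kM less_imp_Suc_add)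
      have eq: "k * (2 ^ M choose k) = 2 ^ M * (N' choose k')"
        using Suc_times_binomial[of k' N'] k' N' by simp
      have C0: "(2 ^ M choose k) \<noteq> 0" using kM by simp
      have "2 ^ M dvd k * (2 ^ M choose k)" using eq by simp
      then have "M \<le> multiplicity 2 (k * (2 ^ M choose k))"
        using dvd_iff_mult k0 C0 by simp
      also have "\<dots> = v + multiplicity 2 (2 ^ M choose k)"
        using m2_mult[OF k0 C0] v_def nu2_def by simp
      finally show "2 ^ m dvd (2 ^ M choose k)"
        using dvd_iff_mult[OF C0] M_def by simp
    qed
  next
    fix y assume H: "k \<le> y \<and> 2 ^ m dvd (y choose k)"
    show "2 ^ M \<le> y"
    proof (rule ccontr)
      assume "\<not> 2 ^ M \<le> y"
      then have yM: "y < 2 ^ M" by simp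
      have C0: "(y choose k) \<noteq> 0" using H by simp
      have e: "m \<le> multiplicity 2 (y choose k)" using H dvd_iff_mult[OF C0] by simp
      have G: "g y = g k + g (y - k) + multiplicity 2 (y choose k)"
      proof -
        have "(fact y::nat) = fact k * fact (y - k) * (y choose k)"
          using binomial_fact_lemma[of k y] H by simp
        moreover have "(fact k::nat) * fact (y - k) \<noteq> 0" by simp
        ultimately show ?thesis using m2_mult[of "fact k * fact (y - k)" "y choose k"]
          m2_mult[of "fact k" "fact (y-k)"] C0 by simp
      qed
      have A: "g y = (\<Sum>i\<in>{1..M}. y div 2 ^ i)" using legendre yM by simp
      have B: "g k = (\<Sum>i\<in>{1..M}. k div 2 ^ i)" using legendre kM by simp
      have C: "g (y-k) = (\<Sum>i\<in>{1..M}. (y-k) div 2 ^ i)" using legendre yM by simp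
      have S: "(\<Sum>i\<in>{1..M}. y div 2 ^ i) \<le>
          (\<Sum>i\<in>{1..M}. k div 2 ^ i + (y-k) div 2 ^ i + (if v < i \<and> i < M then 1 else 0))"
      proof (rule sum_mono)
        fix i assume i: "i \<in> {1..M}"
        have yk: "y = k + (y - k)" using H by simp
        show "y div 2 ^ i \<le> k div 2 ^ i + (y-k) div 2 ^ i + (if v < i \<and> i < M then 1 else 0)"
        proof (cases "i \<le> v")
          case True
          then have "2 ^ i dvd k" using vdvd by (meson dvd_trans le_imp_power_dvd)
          then have "y div 2^i = k div 2 ^ i + (y-k) div 2 ^ i"
            using yk div_plus_div_distrib_dvd_left by metis
          then show ?thesis by simp
        next
          case False
          show ?thesis
          proof (cases "i = M")
            case True
            then show ?thesis using yM by simp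
          next
            case False
            then have "i < M" using i by simp
            then show ?thesis using \<open>\<not> i \<le> v\<close> div_add_le[of k "y-k" "2^i"] yk by simp
          qed
        qed
      qed
      have D: "(\<Sum>i\<in>{1..M}. (if v < i \<and> i < M then 1 else 0)::nat) = card {v<..<M}"
      proof -
        have "{1..M} \<inter> {i. v < i \<and> i < M} = {v<..<M}" by auto
        then show ?thesis by (simp add: sum.If_cases)
      qed
      have S2: "(\<Sum>i\<in>{1..M}. y div 2 ^ i) \<le> (\<Sum>i\<in>{1..M}. k div 2 ^ i)
         + (\<Sum>i\<in>{1..M}. (y-k) div 2 ^ i) + (\<Sum>i\<in>{1..M}. (if v < i \<and> i < M then 1 else 0)::nat)"
        using S by (simp only: sum.distrib)
      have "multiplicity 2 (y choose k) \<le> card {v<..<M}"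
        using G A B C S2 D by linarith
      then have "multiplicity 2 (y choose k) \<le> M - v - 1" by simp

      then show False using e m1 M_def by simp
    qed
  qed
qed

end
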